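(* Let $X$ be a non-compact locally compact Hausdorff space. Then the set $\mathrm{AppInv}(C_0(X))$ of approximately invertible elements of $C_0(X)$ has empty interior in $C_0(X)$ (with respect to the sup norm).
   Context: $C_0(X)$ is the algebra of continuous complex functions on $X$ vanishing at infinity, with pointwise operations and the sup norm. An approximate identity in $C_0(X)$ is a net $(e_j)$ with $\|e_jh-h\|_\infty\to 0$ for every $h\in C_0(X)$. An element $f\in C_0(X)$ is approximately invertible if there is a net $(g_j)$ in $C_0(X)$ such that $(fg_j)$ is an approximate identity in $C_0(X)$. *)

theory Defs
  imports "HOL-Analysis.Analysis"
begin

text \<open>C_0(X): continuous complex functions on the space X vanishing at infinity.
  Functions are taken to be 0 outside the carrier (extensional convention).\<close>
definition C0 :: "'a topology \<Rightarrow> ('a \<Rightarrow> complex) set" where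
  "C0 X = {f. continuous_map X euclidean f
            \<and> (\<forall>e>0. compactin X {x \<in> topspace X. e \<le> cmod (f x)})
            \<and> (\<forall>x. x \<notin> topspace X \<longrightarrow> f x = 0)}"

definition supnorm :: "'a topology \<Rightarrow> ('a \<Rightarrow> complex) \<Rightarrow> real" where
  "supnorm X f = (SUP x\<in>topspace X. cmod (f x))"

text \<open>Nets are represented by proper filters F on an index type together with a map e.\<close>
definition approx_identity :: "'a topology \<Rightarrow> 'i filter \<Rightarrow> ('i \<Rightarrow> 'a \<Rightarrow> complex) \<Rightarrow> bool" where
  "approx_identity X F e \<longleftrightarrow> F \<noteq> bot \<and> (\<forall>j. e j \<in> C0 X)
     \<and> (\<forall>h\<in>C0 X. ((\<lambda>j. supnorm X (\<lambda>x. e j x * h x - h x)) \<longlongrightarrow> 0) F)"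

text \<open>Index type ('a => complex) suffices: any net in C0(X) can be pushed forward to a
  proper filter on C0(X) itself.\<close>
definition approx_invertible :: "'a topology \<Rightarrow> ('a \<Rightarrow> complex) \<Rightarrow> bool" where
  "approx_invertible X f \<longleftrightarrow> f \<in> C0 X \<and>
     (\<exists>(F :: ('a \<Rightarrow> complex) filter) (g :: ('a \<Rightarrow> complex) \<Rightarrow> 'a \<Rightarrow> complex).
        (\<forall>j. g j \<in> C0 X) \<and> approx_identity X F (\<lambda>j x. f x * g j x))"

definition AppInv :: "'a topology \<Rightarrow> ('a \<Rightarrow> complex) set" where
  "AppInv X = {f. approx_invertible X f}"

definition C0_interior :: "'a topology \<Rightarrow> ('a \<Rightarrow> complex) set \<Rightarrow> ('a \<Rightarrow> complex) set" where
  "C0_interior X S = {f \<in> S. \<exists>e>0. \<forall>g\<in>C0 X. supnorm X (\<lambda>x. g x - f x) < e \<longrightarrow> g \<in> S}"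

end

theory Submission
  imports Defs
begin

lemma closed_sub_compactin:
  assumes "closedin X S" "compactin X K" "S \<subseteq> K" shows "compactin X S"
proof -
  have "S = S \<inter> K" using assms(3) by blast
  then show ?thesis using closed_Int_compactin[OF assms(1,2)] by simp
qed

lemma C0_bounded:
  assumes "f \<in> C0 X" shows "\<exists>B. \<forall>x. cmod (f x) \<le> B"
proof -
  let ?S = "{x \<in> topspace X. 1 \<le> cmod (f x)}"
  have c: "compactin X ?S" using assms unfolding C0_def by auto
  have cm: "continuous_map X euclidean f" using assms unfolding C0_def by auto
  have "continuous_map X euclideanreal (\<lambda>x. cmod (f x))"
    using continuous_map_compose[OF cm, of euclideanreal cmod]
    by (simp add: o_def continuous_map_iff_continuous2 continuous_on_norm continuous_on_id)
  then have "compactin euclideanreal ((\<lambda>x. cmod (f x)) ` ?S)"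
    using image_compactin[OF c] by blast
  then have "bounded ((\<lambda>x. cmod (f x)) ` ?S)" by (simp add: compact_imp_bounded)
  then obtain B where B: "\<forall>y\<in>(\<lambda>x. cmod (f x)) ` ?S. norm y \<le> B" by (auto simp: bounded_iff)
  have "\<forall>x. cmod (f x) \<le> max 1 B"
  proof
    fix x
    show "cmod (f x) \<le> max 1 B"
    proof (cases "x \<in> topspace X")
      case True then show ?thesis using B by (cases "1 \<le> cmod (f x)") force+
    next
      case False then show ?thesis using assms unfolding C0_def by auto
    qed
  qed
  then show ?thesis by blast
qed

lemma supnorm_ge:
  assumes "\<forall>x. cmod (k x) \<le> B" "x \<in> topspace X"
  shows "cmod (k x) \<le> supnorm X k"
  unfolding supnorm_def
  by (rule cSUP_upper) (use assms in \<open>auto intro: bdd_aboveI2\<close>)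

lemma bump_exists:
  assumes "Hausdorff_space X" "locally_compact_space X" "x0 \<in> topspace X"
  shows "\<exists>h\<in>C0 X. h x0 = 1"
proof -
  obtain U K where UK: "openin X U" "compactin X K" "x0 \<in> U" "U \<subseteq> K"
    using assms unfolding locally_compact_space_def by blast
  have cr: "completely_regular_space X"
    using assms locally_compact_regular_imp_completely_regular_space by blast
  obtain \<phi> where phi: "continuous_map X (subtopology euclidean {0..1::real}) \<phi>"
      "\<phi> ` (topspace X - U) \<subseteq> {0}" "\<phi> ` {x0} \<subseteq> {1}"
    using Urysohn_completely_regular_compact_closed[of 0 1 X "{x0}" "topspace X - U"] cr UK assms(3)
    by (auto simp: disjnt_def)
  define h where "h x = (if x \<in> topspace X then complex_of_real (\<phi> x) else 0)" for x
  have cphi: "continuous_map X euclideanreal \<phi>"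
    using phi(1) continuous_map_into_fulltopology by blast
  have cof: "continuous_map X euclidean (\<lambda>x. complex_of_real (\<phi> x))"
    using continuous_map_compose[OF cphi, of euclidean complex_of_real]
    by (simp add: o_def continuous_map_iff_continuous2 continuous_on_of_real continuous_on_id)
  have ch: "continuous_map X euclidean h"
    using cof by (rule continuous_map_eq) (simp add: h_def)
  have "h \<in> C0 X"
    unfolding C0_def
  proof (intro CollectI conjI allI impI)
    show "continuous_map X euclidean h" by (rule ch)
    fix e :: real assume "e > 0"
    have cl: "closedin X {x \<in> topspace X. h x \<in> {z. e \<le> cmod z}}"
      by (rule closedin_continuous_map_preimage[OF ch]) (simp add: closed_Collect_le continuous_on_norm continuous_on_const continuous_on_id)
    have "{x \<in> topspace X. e \<le> cmod (h x)} \<subseteq> K"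
    proof
      fix x assume x: "x \<in> {x \<in> topspace X. e \<le> cmod (h x)}"
      show "x \<in> K"
      proof (rule ccontr)
        assume "x \<notin> K"
        then have "x \<in> topspace X - U" using x UK by auto
        then have "\<phi> x = 0" using phi(2) by auto
        then show False using x \<open>e>0\<close> by (auto simp: h_def)
      qed
    qed
    then show "compactin X {x \<in> topspace X. e \<le> cmod (h x)}"
      using closed_sub_compactin[OF _ UK(2)] cl by auto
  next
    fix x assume "x \<notin> topspace X" then show "h x = 0" by (simp add: h_def)
  qed
  moreover have "h x0 = 1" using phi(3) assms(3) by (simp add: h_def)
  ultimately show ?thesis by blast
qed

lemma approx_inv_nonzero:
  assumes "Hausdorff_space X" "locally_compact_space X" "x0 \<in> topspace X"
    and "approx_invertible X f"
  shows "f x0 \<noteq> 0"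
proof
  assume f0: "f x0 = 0"
  obtain h where h: "h \<in> C0 X" "h x0 = 1" using bump_exists[OF assms(1-3)] by blast
  have "\<exists>(F :: ('a \<Rightarrow> complex) filter) (g :: ('a \<Rightarrow> complex) \<Rightarrow> 'a \<Rightarrow> complex).
        (\<forall>j. g j \<in> C0 X) \<and> approx_identity X F (\<lambda>j x. f x * g j x)"
    using assms(4) unfolding approx_invertible_def by (rule conjunct2)
  then obtain F :: "('a \<Rightarrow> complex) filter" and g where
    ai: "approx_identity X F (\<lambda>j x. f x * g j x)" by blast
  have ai': "F \<noteq> bot \<and> (\<forall>j. (\<lambda>x. f x * g j x) \<in> C0 X)
     \<and> (\<forall>h\<in>C0 X. ((\<lambda>j. supnorm X (\<lambda>x. f x * g j x * h x - h x)) \<longlongrightarrow> 0) F)"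
    using ai unfolding approx_identity_def .
  have Fnb: "F \<noteq> bot" using ai' by blast
  have fg: "\<forall>j. (\<lambda>x. f x * g j x) \<in> C0 X" using ai' by blast
  have lim: "((\<lambda>j. supnorm X (\<lambda>x. f x * g j x * h x - h x)) \<longlongrightarrow> 0) F"
    using ai' h(1) by blast
  have "eventually (\<lambda>j. supnorm X (\<lambda>x. f x * g j x * h x - h x) < 1) F"
    using order_tendstoD(2)[OF lim, of 1] by simp
  then obtain j where j: "supnorm X (\<lambda>x. f x * g j x * h x - h x) < 1"
    using eventually_happens'[OF Fnb] by blast
  obtain B1 where B1: "\<forall>x. cmod (f x * g j x) \<le> B1" using C0_bounded fg by blast
  obtain B2 where B2: "\<forall>x. cmod (h x) \<le> B2" using C0_bounded h(1) by blast
  have "\<forall>x. cmod (f x * g j x * h x - h x) \<le> B1 * B2 + B2"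
  proof
    fix x
    have "cmod (f x * g j x * h x - h x) \<le> cmod (f x * g j x) * cmod (h x) + cmod (h x)"
      using norm_triangle_ineq4[of "f x * g j x * h x" "h x"] by (simp add: norm_mult)
    also have "\<dots> \<le> B1 * B2 + B2"
    proof -
      have a: "cmod (f x * g j x) \<le> B1" and b: "cmod (h x) \<le> B2" using B1 B2 by blast+
      have "0 \<le> B1" using a norm_ge_zero order_trans by blast
      then have "cmod (f x * g j x) * cmod (h x) \<le> B1 * B2"
        using mult_mono[OF a b] by simp
      then show ?thesis using b by linarith
    qed
    finally show "cmod (f x * g j x * h x - h x) \<le> B1 * B2 + B2" .
  qed
  from supnorm_ge[OF this assms(3)] have "cmod (f x0 * g j x0 * h x0 - h x0) \<le> supnorm X (\<lambda>x. f x * g j x * h x - h x)" .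
  moreover have "f x0 * g j x0 * h x0 - h x0 = -1" using f0 h(2) by simp
  ultimately show False using j by simp
qed


theorem proposition3p10:
  fixes X :: "'a topology"
  assumes "Hausdorff_space X" and "locally_compact_space X" and "\<not> compact_space X"
  shows "C0_interior X (AppInv X) = {}"
proof (rule ccontr)
  assume "C0_interior X (AppInv X) \<noteq> {}"
  then obtain f e where fA: "f \<in> AppInv X" and e: "e > 0"
    and ball: "\<forall>g\<in>C0 X. supnorm X (\<lambda>x. g x - f x) < e \<longrightarrow> g \<in> AppInv X"
    unfolding C0_interior_def by blast
  have fC: "f \<in> C0 X" using fA unfolding AppInv_def approx_invertible_def by auto
  define d where "d = e / 2"
  have d: "d > 0" "d < e" using e by (auto simp: d_def)
  define r :: "complex \<Rightarrow> complex" where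
    "r z = (if cmod z \<le> d then 0 else complex_of_real (1 - d / cmod z) * z)" for z
  have rb: "cmod (r z - z) \<le> d" for z
  proof (cases "cmod z \<le> d")
    case True then show ?thesis by (simp add: r_def)
  next
    case False
    then have nz: "cmod z > 0" using d by auto
    have "r z - z = - complex_of_real (d / cmod z) * z" using False
      by (simp add: r_def algebra_simps)
    then have "cmod (r z - z) = cmod (complex_of_real (d / cmod z)) * cmod z"
      by (simp only: norm_minus_cancel norm_mult)
    also have "\<dots> = \<bar>d / cmod z\<bar> * cmod z" by (simp only: norm_of_real)
    also have "\<dots> = d / cmod z * cmod z" using d nz by simp
    also have "\<dots> = d" using nz by simp
    finally show ?thesis by simp
  qed
  have rle: "cmod (r z) \<le> cmod z" for z
  proof (cases "cmod z \<le> d")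
    case True then show ?thesis by (simp add: r_def)
  next
    case False
    then have nz: "cmod z > 0" using d by auto
    have "d / cmod z \<le> 1" using False nz by (simp add: divide_le_eq_1)
    have "r z = complex_of_real (1 - d / cmod z) * z" using False by (simp add: r_def)
    then have "cmod (r z) = \<bar>1 - d / cmod z\<bar> * cmod z"
      by (simp only: norm_mult norm_of_real)
    then have "cmod (r z) = (1 - d / cmod z) * cmod z" using \<open>d / cmod z \<le> 1\<close> by simp
    also have "\<dots> \<le> cmod z" using nz d by (simp add: algebra_simps)
    finally show ?thesis .
  qed
  have r0: "r 0 = 0" by (simp add: r_def)
  have "continuous_on ({z. cmod z \<le> d} \<union> {z. d \<le> cmod z}) r"
    unfolding r_def
  proof (rule continuous_on_cases)
    show "closed {z. cmod z \<le> d}" by (simp add: closed_Collect_le continuous_on_norm continuous_on_id continuous_on_const)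
    show "closed {z. d \<le> cmod z}" by (simp add: closed_Collect_le continuous_on_norm continuous_on_id continuous_on_const)
    show "continuous_on {z. cmod z \<le> d} (\<lambda>z. 0)" by simp
    show "continuous_on {z. d \<le> cmod z} (\<lambda>z. complex_of_real (1 - d / cmod z) * z)"
      using d by (intro continuous_intros) auto
    show "\<forall>x. x \<in> {z. cmod z \<le> d} \<and> \<not> cmod x \<le> d \<or> x \<in> {z. d \<le> cmod z} \<and> cmod x \<le> d \<longrightarrow>
        0 = complex_of_real (1 - d / cmod x) * x"
      using d by auto
  qed
  moreover have "{z. cmod z \<le> d} \<union> {z. d \<le> cmod z} = UNIV" by auto
  ultimately have rc: "continuous_on UNIV r" by simp
  define g where "g x = r (f x)" for x
  have fcm: "continuous_map X euclidean f" using fC unfolding C0_def by auto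
  have gcm: "continuous_map X euclidean g"
    using continuous_map_compose[OF fcm, of euclidean r] rc
    by (simp add: o_def g_def[abs_def] continuous_map_iff_continuous2)
  have gC: "g \<in> C0 X"
    unfolding C0_def
  proof (intro CollectI conjI allI impI)
    show "continuous_map X euclidean g" by (rule gcm)
    fix a :: real assume "a > 0"
    have cl: "closedin X {x \<in> topspace X. g x \<in> {z. a \<le> cmod z}}"
      by (rule closedin_continuous_map_preimage[OF gcm]) (simp add: closed_Collect_le continuous_on_norm continuous_on_const continuous_on_id)
    have K: "compactin X {x \<in> topspace X. a \<le> cmod (f x)}" using fC \<open>a>0\<close> unfolding C0_def by auto
    have "{x \<in> topspace X. a \<le> cmod (g x)} \<subseteq> {x \<in> topspace X. a \<le> cmod (f x)}"
      using rle unfolding g_def by (auto intro: order_trans)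
    then show "compactin X {x \<in> topspace X. a \<le> cmod (g x)}"
      using closed_sub_compactin[OF _ K] cl by auto
  next
    fix x assume "x \<notin> topspace X" then show "g x = 0" using fC r0 unfolding C0_def g_def by auto
  qed
  have ne: "topspace X \<noteq> {}" using assms(3) unfolding compact_space_def by auto
  have "supnorm X (\<lambda>x. g x - f x) \<le> d"
    unfolding supnorm_def g_def by (rule cSUP_least[OF ne]) (use rb in auto)
  then have "g \<in> AppInv X" using ball gC d by auto
  then have gA: "approx_invertible X g" unfolding AppInv_def by auto
  have "\<exists>x0\<in>topspace X. cmod (f x0) < d"
  proof (rule ccontr)
    assume "\<not> ?thesis"
    then have "{x \<in> topspace X. d \<le> cmod (f x)} = topspace X" by force
    moreover have "compactin X {x \<in> topspace X. d \<le> cmod (f x)}" using fC d unfolding C0_def by auto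
    ultimately show False using assms(3) unfolding compact_space_def by simp
  qed
  then obtain x0 where x0: "x0 \<in> topspace X" "cmod (f x0) < d" by blast
  have "g x0 = 0" using x0 by (simp add: g_def r_def)
  moreover have "g x0 \<noteq> 0" using approx_inv_nonzero[OF assms(1,2) x0(1) gA] .
  ultimately show False by simp
qed

end
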